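(* Let $G$ be a finite simple undirected graph and $r<s$ positive integers; run set-k on $(G,r,s)$, with processing order $R_1,R_2,\dots$. At any time $t$, for every $K_r$ $R$ that is unprocessed at time $t$, the current value $\delta(R)$ is at least the $\mathcal{S}_t$-degree of $R$. Moreover, if $t=t_k$ for some $k$, then $\delta(R)$ equals the $\mathcal{S}_t$-degree of $R$ for every such unprocessed $R$.
   Context: A $K_r$ is an $r$-clique of $G$. Procedure set-k$(G,r,s)$: enumerate all $K_r$s and $K_s$s of $G$; for every $K_r$ $R$ initialize $\delta(R)$ to the number of $K_s$s containing $R$; mark every $K_r$ unprocessed. Then repeat until all $K_r$s are processed: pick an unprocessed $K_r$ $R$ with minimum current $\delta(R)$ (ties broken arbitrarily); set $\kappa(R)=\delta(R)$; for each $K_s$ $S$ containing $R$: if some $K_r$ contained in $S$ is already marked processed, skip $S$; otherwise, for each $K_r$ $R'\subset S$ with $R'\neq R$, if $\delta(R')>\delta(R)$ then decrease $\delta(R')$ by $1$. Finally mark $R$ processed. $R_i$ denotes the $i$-th processed $K_r$; "at time $t$" means at the beginning of the iteration in which $R_t$ is processed. The sequence $\kappa(R_i)$ is non-decreasing; the transition time $t_k$ is the unique index with $\kappa(R_{t_k})=k$ and ($t_k=1$ or $\kappa(R_{t_k-1})<k$); it is defined only when some $K_r$ receives $\kappa$-value $k$. A $K_s$ $S$ is unprocessed at time $t$ if all $K_r$s contained in $S$ are unprocessed at time $t$; $\mathcal{S}_t$ is the set of such $K_s$s. For a set $\mathcal{S}$ of $K_s$s, the $\mathcal{S}$-degree of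 a $K_r$ $R$ is the number of $S\in\mathcal{S}$ containing $R$. *)

theory Defs
  imports Main
begin

definition simple_graph :: "'a set \<Rightarrow> ('a \<Rightarrow> 'a \<Rightarrow> bool) \<Rightarrow> bool" where
  "simple_graph V E \<longleftrightarrow> finite V \<and> (\<forall>x y. E x y \<longrightarrow> E y x) \<and> (\<forall>x. \<not> E x x)
     \<and> (\<forall>x y. E x y \<longrightarrow> x \<in> V \<and> y \<in> V)"

definition cliques :: "'a set \<Rightarrow> ('a \<Rightarrow> 'a \<Rightarrow> bool) \<Rightarrow> nat \<Rightarrow> 'a set set" where
  "cliques V E r = {C. C \<subseteq> V \<and> card C = r \<and> (\<forall>x\<in>C. \<forall>y\<in>C. x \<noteq> y \<longrightarrow> E x y)}"

definition init_delta :: "'a set \<Rightarrow> ('a \<Rightarrow> 'a \<Rightarrow> bool) \<Rightarrow> nat \<Rightarrow> nat \<Rightarrow> 'a set \<Rightarrow> nat" where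
  "init_delta V E r s R = card {S \<in> cliques V E s. R \<subseteq> S}"

(* Processing of one K_s S during the iteration that processes R, where P is the set of
   K_r's already marked processed (R is not yet in P). *)
definition process_Ks ::
  "'a set \<Rightarrow> ('a \<Rightarrow> 'a \<Rightarrow> bool) \<Rightarrow> nat \<Rightarrow> 'a set set \<Rightarrow> 'a set \<Rightarrow> 'a set \<Rightarrow> ('a set \<Rightarrow> nat) \<Rightarrow> ('a set \<Rightarrow> nat)" where
  "process_Ks V E r P R S \<delta> =
     (if \<exists>R'\<in>cliques V E r. R' \<subseteq> S \<and> R' \<in> P then \<delta>
      else (\<lambda>R'. if R' \<in> cliques V E r \<and> R' \<subseteq> S \<and> R' \<noteq> R \<and> \<delta> R' > \<delta> R
                 then \<delta> R' - 1 else \<delta> R'))"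

(* A run of set-k(G,r,s): Rs is the processing order (Rs ! i is R_{i+1} in the paper),
   ds i is the delta function at the beginning of the iteration processing Rs ! i
   (i.e. at paper-time i+1); ds (length Rs) is the final delta. *)
definition setk_run ::
  "'a set \<Rightarrow> ('a \<Rightarrow> 'a \<Rightarrow> bool) \<Rightarrow> nat \<Rightarrow> nat \<Rightarrow> 'a set list \<Rightarrow> (nat \<Rightarrow> 'a set \<Rightarrow> nat) \<Rightarrow> bool" where
  "setk_run V E r s Rs ds \<longleftrightarrow>
     distinct Rs \<and> set Rs = cliques V E r \<and>
     ds 0 = init_delta V E r s \<and>
     (\<forall>i < length Rs.
        (\<forall>R' \<in> cliques V E r - set (take i Rs). ds i (Rs ! i) \<le> ds i R') \<and>
        (\<exists>Ss. distinct Ss \<and> set Ss = {S \<in> cliques V E s. Rs ! i \<subseteq> S} \<and>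
              ds (Suc i) = fold (process_Ks V E r (set (take i Rs)) (Rs ! i)) Ss (ds i)))"

definition kappa_at :: "'a set list \<Rightarrow> (nat \<Rightarrow> 'a set \<Rightarrow> nat) \<Rightarrow> nat \<Rightarrow> nat" where
  "kappa_at Rs ds i = ds i (Rs ! i)"

(* 0-based index i is the transition time t_k (paper time i+1) *)
definition is_transition_time :: "'a set list \<Rightarrow> (nat \<Rightarrow> 'a set \<Rightarrow> nat) \<Rightarrow> nat \<Rightarrow> nat \<Rightarrow> bool" where
  "is_transition_time Rs ds k i \<longleftrightarrow> i < length Rs \<and> kappa_at Rs ds i = k \<and>
     (i = 0 \<or> kappa_at Rs ds (i - 1) < k)"

definition unproc_Ks :: "'a set \<Rightarrow> ('a \<Rightarrow> 'a \<Rightarrow> bool) \<Rightarrow> nat \<Rightarrow> nat \<Rightarrow> 'a set set \<Rightarrow> 'a set set" where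
  "unproc_Ks V E r s P = {S \<in> cliques V E s. \<forall>R' \<in> cliques V E r. R' \<subseteq> S \<longrightarrow> R' \<notin> P}"

definition Sdeg :: "'a set set \<Rightarrow> 'a set \<Rightarrow> nat" where
  "Sdeg \<SS> R = card {S \<in> \<SS>. R \<subseteq> S}"

end

theory Submission imports Defs begin

definition active :: "'a set \<Rightarrow> ('a \<Rightarrow> 'a \<Rightarrow> bool) \<Rightarrow> nat \<Rightarrow> 'a set set \<Rightarrow> 'a set \<Rightarrow> bool" where
  "active V E r P S \<longleftrightarrow> \<not>(\<exists>R''\<in>cliques V E r. R'' \<subseteq> S \<and> R'' \<in> P)"

lemma fold_closed:
  assumes "R' \<noteq> R" "R' \<in> cliques V E r"
  shows "fold (process_Ks V E r P R) Ss \<delta> R = \<delta> R \<and>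
    fold (process_Ks V E r P R) Ss \<delta> R' =
      max (\<delta> R' - length (filter (\<lambda>S. active V E r P S \<and> R' \<subseteq> S) Ss)) (min (\<delta> R') (\<delta> R))"
  using assms
proof (induction Ss arbitrary: \<delta>)
  case Nil
  then show ?case by simp
next
  case (Cons S Ss)
  let ?d = "process_Ks V E r P R S \<delta>"
  have dR: "?d R = \<delta> R" by (simp add: process_Ks_def)
  have IH: "fold (process_Ks V E r P R) Ss ?d R = ?d R \<and>
    fold (process_Ks V E r P R) Ss ?d R' =
      max (?d R' - length (filter (\<lambda>S. active V E r P S \<and> R' \<subseteq> S) Ss)) (min (?d R') (?d R))"
    using Cons by blast
  show ?case
  proof (cases "active V E r P S \<and> R' \<subseteq> S")
    case True
    then have "?d R' = (if \<delta> R' > \<delta> R then \<delta> R' - 1 else \<delta> R')"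
      using Cons.prems by (auto simp: process_Ks_def active_def)
    then show ?thesis using IH dR True by auto
  next
    case False
    then have "?d R' = \<delta> R'"
      using Cons.prems by (auto simp: process_Ks_def active_def)
    then show ?thesis using IH dR False by auto
  qed
qed


lemma finite_cliques: "simple_graph V E \<Longrightarrow> finite (cliques V E s)"
  unfolding simple_graph_def cliques_def
  by (rule finite_subset[of _ "Pow V"]) auto

lemma take_Suc_set: "j < length Rs \<Longrightarrow> set (take (Suc j) Rs) = insert (Rs ! j) (set (take j Rs))"
  by (simp add: take_Suc_conv_app_nth)

lemma step:
  assumes G: "simple_graph V E" and run: "setk_run V E r s Rs ds" and j: "j < length Rs"
    and R': "R' \<in> cliques V E r" "R' \<notin> set (take (Suc j) Rs)"
  shows "\<exists>c. ds (Suc j) R' = max (ds j R' - c) (min (ds j R') (ds j (Rs!j))) \<and>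
     Sdeg (unproc_Ks V E r s (set (take j Rs))) R' = Sdeg (unproc_Ks V E r s (set (take (Suc j) Rs))) R' + c"
proof -
  let ?P = "set (take j Rs)"
  obtain Ss where Ss: "distinct Ss" "set Ss = {S \<in> cliques V E s. Rs ! j \<subseteq> S}"
    "ds (Suc j) = fold (process_Ks V E r ?P (Rs ! j)) Ss (ds j)"
    using run j unfolding setk_run_def by blast
  have ne: "R' \<noteq> Rs ! j" using R' j take_Suc_set by fastforce
  define c where "c = length (filter (\<lambda>S. active V E r ?P S \<and> R' \<subseteq> S) Ss)"
  have d: "ds (Suc j) R' = max (ds j R' - c) (min (ds j R') (ds j (Rs!j)))"
    using fold_closed[OF ne R'(1), of ?P Ss "ds j"] Ss(3) c_def by simp
  have "c = card (set (filter (\<lambda>S. active V E r ?P S \<and> R' \<subseteq> S) Ss))"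
    unfolding c_def by (metis distinct_card distinct_filter Ss(1))
  also have "set (filter (\<lambda>S. active V E r ?P S \<and> R' \<subseteq> S) Ss) =
     {S \<in> unproc_Ks V E r s ?P. R' \<subseteq> S \<and> Rs ! j \<subseteq> S}"
    using Ss(2) unfolding unproc_Ks_def active_def by auto
  finally have c: "c = card {S \<in> unproc_Ks V E r s ?P. R' \<subseteq> S \<and> Rs ! j \<subseteq> S}" .
  have Rj: "Rs ! j \<in> cliques V E r" using run j unfolding setk_run_def by (metis nth_mem)
  have U: "{S \<in> unproc_Ks V E r s ?P. R' \<subseteq> S} =
      {S \<in> unproc_Ks V E r s (set (take (Suc j) Rs)). R' \<subseteq> S} \<union> {S \<in> unproc_Ks V E r s ?P. R' \<subseteq> S \<and> Rs ! j \<subseteq> S}"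
    using Rj unfolding unproc_Ks_def take_Suc_set[OF j] by auto
  have fin: "finite (unproc_Ks V E r s P)" for P
    using finite_cliques[OF G] unfolding unproc_Ks_def by (rule finite_subset[rotated]) auto
  have "Sdeg (unproc_Ks V E r s ?P) R' = Sdeg (unproc_Ks V E r s (set (take (Suc j) Rs))) R' + c"
    unfolding Sdeg_def c U
    apply (rule card_Un_disjoint)
    using fin apply simp
    using fin apply simp
    using Rj unfolding unproc_Ks_def take_Suc_set[OF j] by auto
  with d show ?thesis by blast
qed


lemma notin_take: "distinct Rs \<Longrightarrow> l < length Rs \<Longrightarrow> Rs ! l \<notin> set (take l Rs)"
proof -
  assume "distinct Rs" "l < length Rs"
  then have "distinct (take (Suc l) Rs)" by simp
  then show ?thesis using \<open>l < length Rs\<close> by (simp add: take_Suc_conv_app_nth)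
qed

lemma base_eq:
  assumes run: "setk_run V E r s Rs ds"
  shows "ds 0 R = Sdeg (unproc_Ks V E r s (set (take 0 Rs))) R"
  using run unfolding setk_run_def init_delta_def Sdeg_def unproc_Ks_def by simp

lemma lower:
  assumes G: "simple_graph V E" and run: "setk_run V E r s Rs ds" and i: "i < length Rs"
    and R: "R \<in> cliques V E r" "R \<notin> set (take i Rs)"
  shows "j \<le> i \<Longrightarrow> Sdeg (unproc_Ks V E r s (set (take j Rs))) R \<le> ds j R"
proof (induction j)
  case 0
  then show ?case using base_eq[OF run] by simp
next
  case (Suc j)
  have nt: "R \<notin> set (take (Suc j) Rs)" using R(2) set_take_subset_set_take[OF Suc.prems, of Rs] by blast
  have jl: "j < length Rs" using Suc.prems i by simp
  obtain c where c1: "ds (Suc j) R = max (ds j R - c) (min (ds j R) (ds j (Rs!j)))"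
     and c2: "Sdeg (unproc_Ks V E r s (set (take j Rs))) R = Sdeg (unproc_Ks V E r s (set (take (Suc j) Rs))) R + c"
    using step[OF G run jl R(1) nt] by blast
  have IH: "Sdeg (unproc_Ks V E r s (set (take j Rs))) R \<le> ds j R" using Suc.IH Suc.prems by simp
  have "ds j R - c \<le> ds (Suc j) R" unfolding c1 by (rule max.cobounded1)
  then show ?case using IH c2 by linarith
qed

lemma kappa_mono1:
  assumes G: "simple_graph V E" and run: "setk_run V E r s Rs ds" and j: "Suc j < length Rs"
  shows "kappa_at Rs ds j \<le> kappa_at Rs ds (Suc j)"
proof -
  have d: "distinct Rs" and cl: "set Rs = cliques V E r" using run unfolding setk_run_def by auto
  have R: "Rs ! Suc j \<in> cliques V E r" using cl j nth_mem by blast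
  have nt: "Rs ! Suc j \<notin> set (take (Suc j) Rs)" using notin_take[OF d j] .
  have nt0: "Rs ! Suc j \<notin> set (take j Rs)" using nt set_take_subset_set_take[of j "Suc j" Rs] by auto
  have "ds j (Rs ! j) \<le> ds j (Rs ! Suc j)"
  proof -
    have jl: "j < length Rs" using j by simp
    have "\<forall>R' \<in> cliques V E r - set (take j Rs). ds j (Rs ! j) \<le> ds j R'"
      using run jl unfolding setk_run_def by blast
    then show ?thesis using R nt0 by blast
  qed
  moreover obtain c where "ds (Suc j) (Rs ! Suc j) = max (ds j (Rs ! Suc j) - c) (min (ds j (Rs ! Suc j)) (ds j (Rs!j)))"
    using step[OF G run _ R nt] j by (meson Suc_lessD)
  ultimately show ?thesis unfolding kappa_at_def by simp
qed

lemma kappa_mono: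
  assumes G: "simple_graph V E" and run: "setk_run V E r s Rs ds"
  shows "l < length Rs \<Longrightarrow> j \<le> l \<Longrightarrow> kappa_at Rs ds j \<le> kappa_at Rs ds l"
proof (induction l)
  case 0
  then show ?case by simp
next
  case (Suc l)
  show ?case
  proof (cases "j = Suc l")
    case False
    then have "kappa_at Rs ds j \<le> kappa_at Rs ds l" using Suc by auto
    also have "\<dots> \<le> kappa_at Rs ds (Suc l)" using kappa_mono1[OF G run] Suc.prems by auto
    finally show ?thesis .
  qed simp
qed

lemma eq_inv:
  assumes G: "simple_graph V E" and run: "setk_run V E r s Rs ds" and i: "i < length Rs"
    and R: "R \<in> cliques V E r" "R \<notin> set (take i Rs)"
    and K: "\<forall>j<i. kappa_at Rs ds j < k"
  shows "j \<le> i \<Longrightarrow> ds j R = Sdeg (unproc_Ks V E r s (set (take j Rs))) R \<or> ds j R < k"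
proof (induction j)
  case 0
  then show ?case using base_eq[OF run] by simp
next
  case (Suc j)
  have nt: "R \<notin> set (take (Suc j) Rs)" using R(2) set_take_subset_set_take[OF Suc.prems, of Rs] by blast
  have jl: "j < length Rs" using Suc.prems i by simp
  obtain c where c1: "ds (Suc j) R = max (ds j R - c) (min (ds j R) (ds j (Rs!j)))"
     and c2: "Sdeg (unproc_Ks V E r s (set (take j Rs))) R = Sdeg (unproc_Ks V E r s (set (take (Suc j) Rs))) R + c"
    using step[OF G run jl R(1) nt] by blast
  have m: "ds j (Rs!j) < k" using K Suc.prems unfolding kappa_at_def by auto
  have IH: "ds j R = Sdeg (unproc_Ks V E r s (set (take j Rs))) R \<or> ds j R < k" using Suc.IH Suc.prems by simp
  show ?case
  proof (cases "ds j R - c \<ge> min (ds j R) (ds j (Rs!j))")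
    case True
    then have "ds (Suc j) R = ds j R - c" unfolding c1 by simp
    then show ?thesis using IH c2 by linarith
  next
    case False
    then have "ds (Suc j) R = min (ds j R) (ds j (Rs!j))" unfolding c1 by simp
    then show ?thesis using m by linarith
  qed
qed

theorem claim2:
  fixes V :: "'a set" and E :: "'a \<Rightarrow> 'a \<Rightarrow> bool" and r s :: nat
    and Rs :: "'a set list" and ds :: "nat \<Rightarrow> 'a set \<Rightarrow> nat"
  assumes "simple_graph V E" and "0 < r" and "r < s"
    and "setk_run V E r s Rs ds"
    and "i < length Rs"
    and "R \<in> cliques V E r" and "R \<notin> set (take i Rs)"
  shows "Sdeg (unproc_Ks V E r s (set (take i Rs))) R \<le> ds i R
         \<and> ((\<exists>k. is_transition_time Rs ds k i) \<longrightarrow>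
              ds i R = Sdeg (unproc_Ks V E r s (set (take i Rs))) R)"
proof
  show "Sdeg (unproc_Ks V E r s (set (take i Rs))) R \<le> ds i R"
    using lower[OF assms(1,4,5,6,7)] by simp
next
  show "(\<exists>k. is_transition_time Rs ds k i) \<longrightarrow>
              ds i R = Sdeg (unproc_Ks V E r s (set (take i Rs))) R"
  proof
    assume "\<exists>k. is_transition_time Rs ds k i"
    then obtain k where t: "kappa_at Rs ds i = k" "i = 0 \<or> kappa_at Rs ds (i - 1) < k"
      unfolding is_transition_time_def by blast
    have K: "\<forall>j<i. kappa_at Rs ds j < k"
    proof (intro allI impI)
      fix j assume "j < i"
      then have "kappa_at Rs ds j \<le> kappa_at Rs ds (i - 1)"
        using kappa_mono[OF assms(1,4)] assms(5) by auto
      then show "kappa_at Rs ds j < k" using t(2) \<open>j < i\<close> by auto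
    qed
    have "\<forall>R' \<in> cliques V E r - set (take i Rs). ds i (Rs ! i) \<le> ds i R'"
      using assms(4,5) unfolding setk_run_def by blast
    then have "ds i (Rs ! i) \<le> ds i R" using assms(6,7) by blast
    then have "\<not> ds i R < k" using t(1) unfolding kappa_at_def by auto
    then show "ds i R = Sdeg (unproc_Ks V E r s (set (take i Rs))) R"
      using eq_inv[OF assms(1,4,5,6,7) K, of i] by auto
  qed
qed

end
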